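(* Let $\mathcal{X}$ be a finite set, $\pi$ a probability mass function on $\mathcal{X}$ with full support, and $P$ an ergodic $\pi$-reversible transition matrix all of whose eigenvalues are non-negative. Let a group $\mathcal{G}$ act on $\mathcal{X}$, and let $G$, $M$, $B$ be the associated Gibbs, Metropolis–Hastings and Barker orbit kernels. Then $V(GPG)\le V(MPM)\le V(P)$ and $V(GPG)\le V(BPB)\le V(P)$.
   Context: With $\mathcal{O}(x)$ the orbit of $x$: $G(x,y)=\pi(y)/\pi(\mathcal{O}(x))$ for $y\in\mathcal{O}(x)$, else $0$; $M(x,y)=\frac{1}{|\mathcal{O}(x)|-1}\min\{1,\pi(y)/\pi(x)\}$ for $y\in\mathcal{O}(x)\setminus\{x\}$, $0$ off the orbit, $M(x,x)=1-\sum_{y\ne x}M(x,y)$; $B$ is the same with acceptance $\pi(y)/(\pi(x)+\pi(y))$. For $f\in\ell^2_0(\pi)=\{f:\sum_xf(x)\pi(x)=0\}$, $v(f,K)=\lim_n\frac1n\mathrm{Var}(\sum_{i=1}^nf(X_i))$ is the asymptotic variance under the $\pi$-stationary kernel $K$, and the worst-case asymptotic variance is $V(K)=\sup\{v(f,K):f\in\ell^2_0(\pi),\ \|f\|_\pi=1\}$, where $\|f\|_\pi^2=\sum_xf(x)^2\pi(x)$; for reversible $K$ this equals $(1+\lambda_2(K))/(1-\lambda_2(K))$ with $\lambda_2$ the second largest eigenvalue. *)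

theory Defs
  imports "HOL-Analysis.Analysis" "HOL-Algebra.Group_Action"
begin

text \<open>Transition kernels on a finite state space 'a are represented as matrices
  K :: 'a \<Rightarrow> 'a \<Rightarrow> real, K x y being the probability of moving from x to y.\<close>

definition kmult :: "('a::finite \<Rightarrow> 'a \<Rightarrow> real) \<Rightarrow> ('a \<Rightarrow> 'a \<Rightarrow> real) \<Rightarrow> 'a \<Rightarrow> 'a \<Rightarrow> real" where
  "kmult K L = (\<lambda>x y. \<Sum>z\<in>UNIV. K x z * L z y)"

definition kid :: "'a \<Rightarrow> 'a \<Rightarrow> real" where
  "kid = (\<lambda>x y. if x = y then 1 else 0)"

fun kpow :: "('a::finite \<Rightarrow> 'a \<Rightarrow> real) \<Rightarrow> nat \<Rightarrow> 'a \<Rightarrow> 'a \<Rightarrow> real" where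
  "kpow K 0 = kid"
| "kpow K (Suc n) = kmult K (kpow K n)"

definition kapply :: "('a::finite \<Rightarrow> 'a \<Rightarrow> real) \<Rightarrow> ('a \<Rightarrow> real) \<Rightarrow> 'a \<Rightarrow> real" where
  "kapply K f = (\<lambda>x. \<Sum>y\<in>UNIV. K x y * f y)"

definition pmf_full :: "('a::finite \<Rightarrow> real) \<Rightarrow> bool" where
  "pmf_full \<pi> \<longleftrightarrow> (\<forall>x. \<pi> x > 0) \<and> (\<Sum>x\<in>UNIV. \<pi> x) = 1"

definition stochastic :: "('a::finite \<Rightarrow> 'a \<Rightarrow> real) \<Rightarrow> bool" where
  "stochastic K \<longleftrightarrow> (\<forall>x y. K x y \<ge> 0) \<and> (\<forall>x. (\<Sum>y\<in>UNIV. K x y) = 1)"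

definition reversible :: "('a \<Rightarrow> real) \<Rightarrow> ('a \<Rightarrow> 'a \<Rightarrow> real) \<Rightarrow> bool" where
  "reversible \<pi> K \<longleftrightarrow> (\<forall>x y. \<pi> x * K x y = \<pi> y * K y x)"

definition irreducible_kernel :: "('a::finite \<Rightarrow> 'a \<Rightarrow> real) \<Rightarrow> bool" where
  "irreducible_kernel K \<longleftrightarrow> (\<forall>x y. \<exists>n. kpow K n x y > 0)"

definition aperiodic_kernel :: "('a::finite \<Rightarrow> 'a \<Rightarrow> real) \<Rightarrow> bool" where
  "aperiodic_kernel K \<longleftrightarrow> (\<forall>x. Gcd {n. n > 0 \<and> kpow K n x x > 0} = 1)"

definition ergodic_kernel :: "('a::finite \<Rightarrow> 'a \<Rightarrow> real) \<Rightarrow> bool" where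
  "ergodic_kernel K \<longleftrightarrow> stochastic K \<and> irreducible_kernel K \<and> aperiodic_kernel K"

definition kernel_eigenvalue :: "('a::finite \<Rightarrow> 'a \<Rightarrow> real) \<Rightarrow> complex \<Rightarrow> bool" where
  "kernel_eigenvalue K mu \<longleftrightarrow>
     (\<exists>v :: 'a \<Rightarrow> complex. v \<noteq> (\<lambda>_. 0) \<and> (\<forall>x. (\<Sum>y\<in>UNIV. complex_of_real (K x y) * v y) = mu * v x))"

definition gibbs_kernel :: "_ \<Rightarrow> ('g \<Rightarrow> 'a \<Rightarrow> 'a) \<Rightarrow> ('a::finite \<Rightarrow> real) \<Rightarrow> 'a \<Rightarrow> 'a \<Rightarrow> real" where
  "gibbs_kernel G \<phi> \<pi> = (\<lambda>x y. if y \<in> orbit G \<phi> x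
       then \<pi> y / (\<Sum>z\<in>orbit G \<phi> x. \<pi> z) else 0)"

definition orbit_mh_kernel :: "(real \<Rightarrow> real \<Rightarrow> real) \<Rightarrow> _ \<Rightarrow> ('g \<Rightarrow> 'a \<Rightarrow> 'a) \<Rightarrow> ('a::finite \<Rightarrow> real) \<Rightarrow> 'a \<Rightarrow> 'a \<Rightarrow> real" where
  "orbit_mh_kernel acc G \<phi> \<pi> =
     (let off = (\<lambda>x y. if y \<in> orbit G \<phi> x - {x}
                    then (1 / (real (card (orbit G \<phi> x)) - 1)) * acc (\<pi> x) (\<pi> y) else 0)
      in (\<lambda>x y. if x = y then 1 - (\<Sum>z\<in>UNIV - {x}. off x z) else off x y))"

definition metropolis_kernel :: "_ \<Rightarrow> ('g \<Rightarrow> 'a \<Rightarrow> 'a) \<Rightarrow> ('a::finite \<Rightarrow> real) \<Rightarrow> 'a \<Rightarrow> 'a \<Rightarrow> real" where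
  "metropolis_kernel = orbit_mh_kernel (\<lambda>px py. min 1 (py / px))"

definition barker_kernel :: "_ \<Rightarrow> ('g \<Rightarrow> 'a \<Rightarrow> 'a) \<Rightarrow> ('a::finite \<Rightarrow> real) \<Rightarrow> 'a \<Rightarrow> 'a \<Rightarrow> real" where
  "barker_kernel = orbit_mh_kernel (\<lambda>px py. py / (px + py))"

text \<open>Variance of the partial sum f(X_1)+...+f(X_n) of the stationary chain
  (X_1 ~ pi) driven by K, written via covariances:
  Cov(f(X_i), f(X_j)) = sum_x pi(x) f(x) (K^|i-j| f)(x) - (pi f)^2.\<close>
definition partial_sum_variance :: "('a::finite \<Rightarrow> real) \<Rightarrow> ('a \<Rightarrow> 'a \<Rightarrow> real) \<Rightarrow> ('a \<Rightarrow> real) \<Rightarrow> nat \<Rightarrow> real" where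
  "partial_sum_variance \<pi> K f n =
     (\<Sum>i\<in>{1..n}. \<Sum>j\<in>{1..n}.
        (\<Sum>x\<in>UNIV. \<pi> x * f x * kapply (kpow K (nat \<bar>int i - int j\<bar>)) f x)
        - (\<Sum>x\<in>UNIV. \<pi> x * f x)^2)"

definition asym_var :: "('a::finite \<Rightarrow> real) \<Rightarrow> ('a \<Rightarrow> 'a \<Rightarrow> real) \<Rightarrow> ('a \<Rightarrow> real) \<Rightarrow> ereal" where
  "asym_var \<pi> K f = lim (\<lambda>n. ereal (partial_sum_variance \<pi> K f n / real n))"

definition worst_asym_var :: "('a::finite \<Rightarrow> real) \<Rightarrow> ('a \<Rightarrow> 'a \<Rightarrow> real) \<Rightarrow> ereal" where
  "worst_asym_var \<pi> K = (SUP f\<in>{f. (\<Sum>x\<in>UNIV. f x * \<pi> x) = 0 \<and> (\<Sum>x\<in>UNIV. (f x)^2 * \<pi> x) = 1}.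
      asym_var \<pi> K f)"

end

theory Submission
  imports Defs
begin

definition ip :: "('a::finite \<Rightarrow> real) \<Rightarrow> ('a \<Rightarrow> real) \<Rightarrow> ('a \<Rightarrow> real) \<Rightarrow> real" where
  "ip \<pi> f g = (\<Sum>x\<in>UNIV. \<pi> x * f x * g x)"

definition L0 :: "('a::finite \<Rightarrow> real) \<Rightarrow> ('a \<Rightarrow> real) set" where
  "L0 \<pi> = {f. (\<Sum>x\<in>UNIV. f x * \<pi> x) = 0}"

definition SS :: "('a::finite \<Rightarrow> real) \<Rightarrow> ('a \<Rightarrow> real) set" where
  "SS \<pi> = {f. (\<Sum>x\<in>UNIV. f x * \<pi> x) = 0 \<and> (\<Sum>x\<in>UNIV. (f x)^2 * \<pi> x) = 1}"

definition selfadj :: "('a::finite \<Rightarrow> real) \<Rightarrow> ('a \<Rightarrow> 'a \<Rightarrow> real) \<Rightarrow> bool" where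
  "selfadj \<pi> K \<longleftrightarrow> (\<forall>f g. ip \<pi> (kapply K f) g = ip \<pi> f (kapply K g))"

definition corr :: "('a::finite \<Rightarrow> real) \<Rightarrow> ('a \<Rightarrow> 'a \<Rightarrow> real) \<Rightarrow> ('a \<Rightarrow> real) \<Rightarrow> nat \<Rightarrow> real" where
  "corr \<pi> K f k = ip \<pi> f (kapply (kpow K k) f)"

lemma ip_sym: "ip \<pi> f g = ip \<pi> g f"
  unfolding ip_def by (simp add: algebra_simps)

lemma ip_add_right: "ip \<pi> f (\<lambda>x. g x + h x) = ip \<pi> f g + ip \<pi> f h"
  unfolding ip_def by (simp add: algebra_simps sum.distrib)

lemma ip_diff_right: "ip \<pi> f (\<lambda>x. g x - h x) = ip \<pi> f g - ip \<pi> f h"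
  unfolding ip_def by (simp add: algebra_simps sum_subtractf)

lemma ip_scale_right: "ip \<pi> f (\<lambda>x. c * g x) = c * ip \<pi> f g"
  unfolding ip_def by (simp add: algebra_simps sum_distrib_left)

lemma ip_add_left: "ip \<pi> (\<lambda>x. g x + h x) f = ip \<pi> g f + ip \<pi> h f"
  unfolding ip_def by (simp add: algebra_simps sum.distrib)

lemma ip_diff_left: "ip \<pi> (\<lambda>x. g x - h x) f = ip \<pi> g f - ip \<pi> h f"
  unfolding ip_def by (simp add: algebra_simps sum_subtractf)

lemma ip_scale_left: "ip \<pi> (\<lambda>x. c * g x) f = c * ip \<pi> g f"
  unfolding ip_def by (simp add: algebra_simps sum_distrib_left)

lemma ip_self_ge0: "(\<And>x. \<pi> x > 0) \<Longrightarrow> ip \<pi> f f \<ge> 0"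
  unfolding ip_def by (intro sum_nonneg) (metis mult.assoc mult_nonneg_nonneg zero_le_square less_imp_le)

lemma ip_self_eq0: "(\<And>x. \<pi> x > 0) \<Longrightarrow> ip \<pi> f f = 0 \<Longrightarrow> f = (\<lambda>_. 0)"
proof -
  assume pos: "\<And>x. \<pi> x > 0" and z: "ip \<pi> f f = 0"
  have "\<forall>x\<in>UNIV. \<pi> x * f x * f x = 0"
    using z unfolding ip_def
    by (subst sum_nonneg_eq_0_iff[symmetric]) (auto, metis mult.assoc mult_nonneg_nonneg zero_le_square less_imp_le pos)
  then show ?thesis using pos by (auto intro!: ext) (metis less_irrefl)
qed

lemma ip_neg_left: "ip \<pi> (\<lambda>x. - g x) f = - ip \<pi> g f"
  unfolding ip_def by (simp add: sum_negf)

lemma ip_neg_right: "ip \<pi> f (\<lambda>x. - g x) = - ip \<pi> f g"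
  unfolding ip_def by (simp add: sum_negf)

lemma ip_sq: "(\<Sum>x\<in>UNIV. (f x)^2 * \<pi> x) = ip \<pi> f f"
  unfolding ip_def by (simp add: power2_eq_square algebra_simps)

lemma L0_ip: "(\<Sum>x\<in>UNIV. f x * \<pi> x) = ip \<pi> f (\<lambda>_. 1)"
  unfolding ip_def by (simp add: algebra_simps)

lemma kapply_add: "kapply K (\<lambda>x. f x + g x) = (\<lambda>x. kapply K f x + kapply K g x)"
  unfolding kapply_def by (simp add: algebra_simps sum.distrib)

lemma kapply_diff: "kapply K (\<lambda>x. f x - g x) = (\<lambda>x. kapply K f x - kapply K g x)"
  unfolding kapply_def by (simp add: algebra_simps sum_subtractf)

lemma kapply_scale: "kapply K (\<lambda>x. c * f x) = (\<lambda>x. c * kapply K f x)"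
  unfolding kapply_def by (simp add: algebra_simps sum_distrib_left)

lemma kapply_kmult: "kapply (kmult A B) f = kapply A (kapply B f)"
  unfolding kapply_def kmult_def
  by (auto simp: sum_distrib_left sum_distrib_right algebra_simps intro!: ext sum.swap)

lemma kapply_kid: "kapply kid f = f"
proof (rule ext)
  fix x
  have "(\<Sum>y\<in>UNIV. (if x = y then 1 else 0) * f y) = (\<Sum>y\<in>UNIV. if x = y then f y else 0)"
    by (rule sum.cong) auto
  then show "kapply kid f x = f x" unfolding kapply_def kid_def by simp
qed

lemma kapply_kpow_Suc: "kapply (kpow K (Suc n)) f = kapply K (kapply (kpow K n) f)"
  by (simp add: kapply_kmult)

lemma kapply_kpow_add: "kapply (kpow K (a + b)) f = kapply (kpow K a) (kapply (kpow K b) f)"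
  by (induction a) (simp_all add: kapply_kid kapply_kmult)

lemma kapply_neg: "kapply (\<lambda>x y. - K x y) f = (\<lambda>x. - kapply K f x)"
  unfolding kapply_def by (simp add: sum_negf)


lemma L0_iff: "f \<in> L0 \<pi> \<longleftrightarrow> ip \<pi> f (\<lambda>_. 1) = 0"
  unfolding L0_def by (simp add: L0_ip)

lemma L0_lin: "f \<in> L0 \<pi> \<Longrightarrow> g \<in> L0 \<pi> \<Longrightarrow> (\<lambda>x. f x + t * g x) \<in> L0 \<pi>"
  unfolding L0_iff by (simp add: ip_add_left ip_scale_left)

lemma L0_diff: "f \<in> L0 \<pi> \<Longrightarrow> g \<in> L0 \<pi> \<Longrightarrow> (\<lambda>x. f x - g x) \<in> L0 \<pi>"
  unfolding L0_iff by (simp add: ip_diff_left)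

lemma L0_scale: "f \<in> L0 \<pi> \<Longrightarrow> (\<lambda>x. t * f x) \<in> L0 \<pi>"
  unfolding L0_iff by (simp add: ip_scale_left)

lemma reversible_selfadj:
  assumes rev: "reversible \<pi> K"
  shows "selfadj \<pi> K"
  unfolding selfadj_def
proof (intro allI)
  fix f g :: "'a \<Rightarrow> real"
  have "ip \<pi> (kapply K f) g = (\<Sum>x\<in>UNIV. \<Sum>y\<in>UNIV. (\<pi> x * K x y) * (f y * g x))"
    by (simp add: ip_def kapply_def sum_distrib_left sum_distrib_right algebra_simps)
  also have "\<dots> = (\<Sum>x\<in>UNIV. \<Sum>y\<in>UNIV. (\<pi> y * K y x) * (f y * g x))"
    by (intro sum.cong refl) (metis rev reversible_def)
  also have "\<dots> = (\<Sum>y\<in>UNIV. \<Sum>x\<in>UNIV. (\<pi> y * K y x) * (f y * g x))"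
    by (rule sum.swap)
  also have "\<dots> = ip \<pi> f (kapply K g)"
    by (simp add: ip_def kapply_def sum_distrib_left algebra_simps)
  finally show "ip \<pi> (kapply K f) g = ip \<pi> f (kapply K g)" .
qed

lemma selfadj_sandwich:
  assumes "selfadj \<pi> A" "selfadj \<pi> B"
  shows "selfadj \<pi> (kmult (kmult A B) A)"
  using assms unfolding selfadj_def by (simp add: kapply_kmult)

lemma selfadj_neg: "selfadj \<pi> K \<Longrightarrow> selfadj \<pi> (\<lambda>x y. - K x y)"
  unfolding selfadj_def kapply_neg by (simp add: ip_neg_left ip_neg_right)

lemma selfadj_kpow: "selfadj \<pi> K \<Longrightarrow> ip \<pi> (kapply (kpow K n) f) g = ip \<pi> f (kapply (kpow K n) g)"
proof (induction n arbitrary: f g)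
  case 0
  then show ?case by (simp add: kapply_kid)
next
  case (Suc n)
  have k1: "kapply (kpow K 1) h = kapply K h" for h by (simp add: kapply_kid kapply_kmult)
  have "ip \<pi> (kapply (kpow K (Suc n)) f) g = ip \<pi> (kapply K (kapply (kpow K n) f)) g"
    by (simp add: kapply_kmult)
  also have "\<dots> = ip \<pi> (kapply (kpow K n) f) (kapply K g)" using Suc.prems by (simp add: selfadj_def)
  also have "\<dots> = ip \<pi> f (kapply (kpow K n) (kapply K g))" using Suc.IH Suc.prems by simp
  also have "\<dots> = ip \<pi> f (kapply (kpow K (n + 1)) g)" by (simp only: kapply_kpow_add k1)
  finally show ?case by simp
qed

lemma rowsum_const:
  assumes "\<forall>x. (\<Sum>y\<in>UNIV. K x y) = 1"
  shows "kapply K (\<lambda>_. c) = (\<lambda>_. c)"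
  using assms unfolding kapply_def by (simp add: sum_distrib_right[symmetric])

definition preserves :: "('a::finite \<Rightarrow> real) \<Rightarrow> ('a \<Rightarrow> 'a \<Rightarrow> real) \<Rightarrow> bool" where
  "preserves \<pi> K \<longleftrightarrow> (\<forall>f\<in>L0 \<pi>. kapply K f \<in> L0 \<pi>)"

lemma preserves_rowsum:
  assumes "selfadj \<pi> K" "\<forall>x. (\<Sum>y\<in>UNIV. K x y) = 1"
  shows "preserves \<pi> K"
  unfolding preserves_def
proof
  fix f assume "f \<in> L0 \<pi>"
  then have "ip \<pi> f (\<lambda>_. 1) = 0" by (simp add: L0_iff)
  then show "kapply K f \<in> L0 \<pi>"
    using assms unfolding L0_iff selfadj_def by (simp add: rowsum_const)
qed

lemma preserves_neg: "preserves \<pi> K \<Longrightarrow> preserves \<pi> (\<lambda>x y. - K x y)"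
  unfolding preserves_def kapply_neg using L0_scale[of _ \<pi> "-1"] by simp

lemma preserves_sandwich:
  "preserves \<pi> A \<Longrightarrow> preserves \<pi> B \<Longrightarrow> preserves \<pi> (kmult (kmult A B) A)"
  unfolding preserves_def by (simp add: kapply_kmult)

lemma preserves_kpow: "preserves \<pi> K \<Longrightarrow> f \<in> L0 \<pi> \<Longrightarrow> kapply (kpow K n) f \<in> L0 \<pi>"
  by (induction n) (simp_all add: kapply_kid kapply_kmult preserves_def)

lemma quad_cs:
  fixes a b c :: real
  assumes q: "\<forall>t. 0 \<le> a + 2*b*t + c*t^2" and c: "c \<ge> 0"
  shows "b^2 \<le> a*c"
proof (cases "c = 0")
  case True
  have "b = 0"
  proof (rule ccontr)
    assume "b \<noteq> 0"
    have "0 \<le> a + 2*b*(-(\<bar>a\<bar>+1)/b) + c*(-(\<bar>a\<bar>+1)/b)^2" using q by blast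
    also have "\<dots> = a - 2*(\<bar>a\<bar>+1)" using \<open>b \<noteq> 0\<close> True by (simp add: field_simps)
    finally show False by (cases "a \<ge> 0") auto
  qed
  then show ?thesis using True by simp
next
  case False
  then have cp: "c > 0" using c by simp
  have "0 \<le> a + 2*b*(-b/c) + c*(-b/c)^2" using q by blast
  also have "\<dots> = a - b^2/c" using cp by (simp add: field_simps power2_eq_square)
  finally have "b^2/c \<le> a" by simp
  then show ?thesis using cp by (simp add: field_simps mult.commute)
qed

lemma quad_zero:
  fixes b c :: real
  assumes q: "\<forall>t. 0 \<le> 2*b*t + c*t^2"
  shows "b = 0"
proof -
  define d where "d = \<bar>c\<bar> + 1"
  have d: "d > 0" "c \<le> d - 1" unfolding d_def by auto
  have "0 \<le> 2*b*(-b/d) + c*(-b/d)^2" using q by blast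
  then have "0 \<le> (2*b*(-b/d) + c*(-b/d)^2) * d^2" using d by simp
  also have "\<dots> = -2*b^2*d + c*b^2" using d by (simp add: field_simps power2_eq_square)
  also have "\<dots> \<le> -2*b^2*d + (d - 1)*b^2" using d by (intro add_left_mono mult_right_mono) auto
  finally have "b^2 * (d + 1) \<le> 0" by (simp add: algebra_simps)
  then have "b^2 \<le> 0" using d by (simp add: mult_le_0_iff)
  then show ?thesis by simp
qed


section \<open>Bounds on correlations\<close>

lemma norm_K_bound:
  assumes pos: "\<And>x. \<pi> x > 0" and sa: "selfadj \<pi> K" and pr: "preserves \<pi> K"
    and psd: "\<forall>g\<in>L0 \<pi>. 0 \<le> ip \<pi> g (kapply K g)"
    and ray: "\<forall>g\<in>L0 \<pi>. ip \<pi> g (kapply K g) \<le> lam * ip \<pi> g g"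
    and lam: "lam \<ge> 0" and h: "h \<in> L0 \<pi>"
  shows "ip \<pi> (kapply K h) (kapply K h) \<le> lam * ip \<pi> h (kapply K h)"
proof -
  define u where "u = kapply K h"
  have u: "u \<in> L0 \<pi>" using pr h unfolding u_def preserves_def by blast
  have hu: "ip \<pi> h (kapply K u) = ip \<pi> u (kapply K h)"
    using sa unfolding selfadj_def u_def by (metis ip_sym)
  have q: "\<forall>t. 0 \<le> ip \<pi> u (kapply K u) + 2 * ip \<pi> u (kapply K h) * t + ip \<pi> h (kapply K h) * t^2"
  proof
    fix t
    have "(\<lambda>x. u x + t * h x) \<in> L0 \<pi>" using L0_lin[OF u h] .
    then have "0 \<le> ip \<pi> (\<lambda>x. u x + t * h x) (kapply K (\<lambda>x. u x + t * h x))" using psd by blast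
    also have "ip \<pi> (\<lambda>x. u x + t * h x) (kapply K (\<lambda>x. u x + t * h x))
        = ip \<pi> u (kapply K u) + t * ip \<pi> u (kapply K h) + t * (ip \<pi> h (kapply K u) + t * ip \<pi> h (kapply K h))"
      by (simp add: kapply_add kapply_scale ip_add_left ip_scale_left ip_add_right ip_scale_right)
    also have "\<dots> = ip \<pi> u (kapply K u) + 2 * ip \<pi> u (kapply K h) * t + ip \<pi> h (kapply K h) * t^2"
      using hu by (simp add: algebra_simps power2_eq_square)
    finally show "0 \<le> ip \<pi> u (kapply K u) + 2 * ip \<pi> u (kapply K h) * t + ip \<pi> h (kapply K h) * t^2" .
  qed
  have c0: "ip \<pi> h (kapply K h) \<ge> 0" using psd h by blast
  have cs: "(ip \<pi> u (kapply K h))^2 \<le> ip \<pi> u (kapply K u) * ip \<pi> h (kapply K h)"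
    by (rule quad_cs[OF q c0])
  define N where "N = ip \<pi> u u"
  have uN: "ip \<pi> u (kapply K h) = N" unfolding N_def u_def ..
  have Nr: "ip \<pi> u (kapply K u) \<le> lam * N" using ray u unfolding N_def by blast
  have "N^2 \<le> lam * N * ip \<pi> h (kapply K h)"
    using cs uN Nr c0 by (metis mult_right_mono order_trans)
  then have "N * N \<le> N * (lam * ip \<pi> h (kapply K h))" by (simp add: power2_eq_square algebra_simps)
  moreover have "N \<ge> 0" unfolding N_def using ip_self_ge0[OF pos] .
  ultimately have "N \<le> lam * ip \<pi> h (kapply K h)"
    using lam c0 by (cases "N = 0") (auto simp: mult_le_cancel_left)
  then show ?thesis unfolding N_def u_def .
qed


lemma kpow_one: "kapply (kpow K (Suc 0)) h = kapply K h"
  by (simp add: kapply_kid kapply_kmult)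

lemma corr_even:
  assumes "selfadj \<pi> K"
  shows "corr \<pi> K f (2*m) = ip \<pi> (kapply (kpow K m) f) (kapply (kpow K m) f)"
proof -
  have "corr \<pi> K f (2*m) = ip \<pi> f (kapply (kpow K m) (kapply (kpow K m) f))"
    unfolding corr_def by (simp add: mult_2 kapply_kpow_add)
  also have "\<dots> = ip \<pi> (kapply (kpow K m) f) (kapply (kpow K m) f)"
    using selfadj_kpow[OF assms] by simp
  finally show ?thesis .
qed

lemma corr_odd:
  assumes "selfadj \<pi> K"
  shows "corr \<pi> K f (2*m+1) = ip \<pi> (kapply (kpow K m) f) (kapply K (kapply (kpow K m) f))"
proof -
  have "2*m+1 = m + Suc m" by simp
  then have "corr \<pi> K f (2*m+1) = ip \<pi> f (kapply (kpow K m) (kapply K (kapply (kpow K m) f)))"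
    unfolding corr_def by (simp only: kapply_kpow_add kapply_kpow_Suc)
  also have "\<dots> = ip \<pi> (kapply (kpow K m) f) (kapply K (kapply (kpow K m) f))"
    using selfadj_kpow[OF assms] by simp
  finally show ?thesis .
qed

lemma corr_step:
  assumes pos: "\<And>x. \<pi> x > 0" and sa: "selfadj \<pi> K" and pr: "preserves \<pi> K"
    and psd: "\<forall>g\<in>L0 \<pi>. 0 \<le> ip \<pi> g (kapply K g)"
    and ray: "\<forall>g\<in>L0 \<pi>. ip \<pi> g (kapply K g) \<le> lam * ip \<pi> g g"
    and lam: "lam \<ge> 0" and f: "f \<in> L0 \<pi>"
  shows "0 \<le> corr \<pi> K f k \<and> corr \<pi> K f (Suc k) \<le> lam * corr \<pi> K f k"
proof (cases "even k")
  case True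
  then obtain m where k: "k = 2*m" by (auto elim: evenE)
  define h where "h = kapply (kpow K m) f"
  have h: "h \<in> L0 \<pi>" unfolding h_def using preserves_kpow[OF pr f] .
  have e: "corr \<pi> K f k = ip \<pi> h h" unfolding k h_def using corr_even[OF sa] .
  have o: "corr \<pi> K f (Suc k) = ip \<pi> h (kapply K h)" unfolding k h_def using corr_odd[OF sa] by simp
  show ?thesis using e o ip_self_ge0[OF pos] ray h by auto
next
  case False
  then obtain m where k: "k = 2*m+1" by (auto elim: oddE)
  define h where "h = kapply (kpow K m) f"
  have h: "h \<in> L0 \<pi>" unfolding h_def using preserves_kpow[OF pr f] .
  have o: "corr \<pi> K f k = ip \<pi> h (kapply K h)" unfolding k h_def using corr_odd[OF sa] by simp
  have "corr \<pi> K f (Suc k) = corr \<pi> K f (2 * Suc m)" using k by simp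
  also have "\<dots> = ip \<pi> (kapply K h) (kapply K h)"
    unfolding h_def using corr_even[OF sa, of f "Suc m"] by (simp only: kpow.simps kapply_kmult)
  finally have e: "corr \<pi> K f (Suc k) = ip \<pi> (kapply K h) (kapply K h)" .
  show ?thesis using e o norm_K_bound[OF pos sa pr psd ray lam h] psd h by auto
qed

lemma corr_geom:
  assumes pos: "\<And>x. \<pi> x > 0" and sa: "selfadj \<pi> K" and pr: "preserves \<pi> K"
    and psd: "\<forall>g\<in>L0 \<pi>. 0 \<le> ip \<pi> g (kapply K g)"
    and ray: "\<forall>g\<in>L0 \<pi>. ip \<pi> g (kapply K g) \<le> lam * ip \<pi> g g"
    and lam: "lam \<ge> 0" and f: "f \<in> L0 \<pi>"
  shows "0 \<le> corr \<pi> K f k \<and> corr \<pi> K f k \<le> lam^k * corr \<pi> K f 0"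
proof (induction k)
  case 0
  then show ?case using corr_step[OF assms, of 0] by simp
next
  case (Suc k)
  have st: "0 \<le> corr \<pi> K f (Suc k)" "corr \<pi> K f (Suc k) \<le> lam * corr \<pi> K f k"
    using corr_step[OF assms, of "Suc k"] corr_step[OF assms, of k] by auto
  have "lam * corr \<pi> K f k \<le> lam * (lam^k * corr \<pi> K f 0)"
    using Suc.IH lam by (intro mult_left_mono) auto
  then show ?case using st by simp
qed

section \<open>Asymptotic variance formula\<close>

lemma nat_aux:
  assumes "1 \<le> a" "a \<le> n" shows "nat (1 + int n - int a) = Suc n - a"
proof -
  have "int (Suc n - a) = 1 + int n - int a" using assms by (simp add: of_nat_diff)
  then show ?thesis by (metis nat_int)
qed

lemma row_sum_reindex:
  fixes c :: "nat \<Rightarrow> real"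
  shows "(\<Sum>j\<in>{1..n}. c (nat \<bar>int (Suc n) - int j\<bar>)) = (\<Sum>k\<in>{1..n}. c k)"
  by (rule sum.reindex_bij_witness[of _ "\<lambda>k. Suc n - k" "\<lambda>j. Suc n - j"]) (auto simp: nat_aux)

lemma double_sum:
  fixes c :: "nat \<Rightarrow> real"
  shows "(\<Sum>i\<in>{1..n}. \<Sum>j\<in>{1..n}. c (nat \<bar>int i - int j\<bar>))
       = (\<Sum>m<n. c 0 + 2 * (\<Sum>k\<in>{1..m}. c k))"
proof (induction n)
  case 0
  then show ?case by simp
next
  case (Suc n)
  have ins: "{1..Suc n} = insert (Suc n) {1..n}" by auto
  have row: "(\<Sum>j\<in>{1..n}. c (nat \<bar>int (Suc n) - int j\<bar>)) = (\<Sum>k\<in>{1..n}. c k)"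
    by (rule row_sum_reindex)
  have col: "(\<Sum>i\<in>{1..n}. c (nat \<bar>int i - int (Suc n)\<bar>)) = (\<Sum>k\<in>{1..n}. c k)"
    using row by (simp add: abs_minus_commute)
  have "(\<Sum>i\<in>{1..Suc n}. \<Sum>j\<in>{1..Suc n}. c (nat \<bar>int i - int j\<bar>))
      = (c 0 + (\<Sum>j\<in>{1..n}. c (nat \<bar>int (Suc n) - int j\<bar>)))
        + (\<Sum>i\<in>{1..n}. c (nat \<bar>int i - int (Suc n)\<bar>) + (\<Sum>j\<in>{1..n}. c (nat \<bar>int i - int j\<bar>)))"
    unfolding ins by (simp add: sum.insert)
  also have "\<dots> = c 0 + 2 * (\<Sum>k\<in>{1..n}. c k) + (\<Sum>i\<in>{1..n}. \<Sum>j\<in>{1..n}. c (nat \<bar>int i - int j\<bar>))"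
    using row col by (simp add: sum.distrib)
  also have "\<dots> = (\<Sum>m<Suc n. c 0 + 2 * (\<Sum>k\<in>{1..m}. c k))"
    using Suc.IH by simp
  finally show ?case .
qed

lemma cesaro:
  fixes T :: "nat \<Rightarrow> real"
  assumes "T \<longlonglongrightarrow> L"
  shows "(\<lambda>n. (\<Sum>m<n. T m) / real n) \<longlonglongrightarrow> L"
proof -
  define D where "D m = T m - L" for m
  have D0: "D \<longlonglongrightarrow> 0" unfolding D_def using assms by (simp add: LIM_zero)
  have key: "(\<lambda>n. (\<Sum>m<n. D m) / real n) \<longlonglongrightarrow> 0"
  proof (rule LIMSEQ_I)
    fix e :: real assume e: "0 < e"
    obtain N where N: "\<forall>m\<ge>N. norm (D m - 0) < e/2" using LIMSEQ_D[OF D0, of "e/2"] e by auto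
    define A where "A = (\<Sum>m<N. \<bar>D m\<bar>)"
    have A0: "A \<ge> 0" unfolding A_def by (simp add: sum_nonneg)
    define N' where "N' = max (Suc N) (nat \<lceil>2*A/e\<rceil> + 1)"
    show "\<exists>no. \<forall>n\<ge>no. norm ((\<Sum>m<n. D m) / real n - 0) < e"
    proof (intro exI allI impI)
      fix n assume n: "N' \<le> n"
      then have nN: "N \<le> n" and npos: "n > 0" unfolding N'_def by auto
      have "real n \<ge> real (nat \<lceil>2*A/e\<rceil> + 1)" using n unfolding N'_def by linarith
      then have "real n > 2*A/e" by linarith
      then have An: "A < real n * e / 2" using e by (simp add: field_simps)
      have split: "{..<n} = {..<N} \<union> {N..<n}" using nN by auto
      have "\<bar>\<Sum>m<n. D m\<bar> \<le> (\<Sum>m<n. \<bar>D m\<bar>)" by (rule sum_abs)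
      also have "\<dots> = A + (\<Sum>m\<in>{N..<n}. \<bar>D m\<bar>)"
        unfolding A_def split by (subst sum.union_disjoint) auto
      also have "(\<Sum>m\<in>{N..<n}. \<bar>D m\<bar>) \<le> (\<Sum>m\<in>{N..<n}. e/2)"
        using N by (intro sum_mono) (auto intro: less_imp_le)
      also have "\<dots> = real (n - N) * (e/2)" by simp
      also have "\<dots> \<le> real n * (e/2)" using e by (intro mult_right_mono) auto
      finally have "\<bar>\<Sum>m<n. D m\<bar> < real n * e" using An by linarith
      then show "norm ((\<Sum>m<n. D m) / real n - 0) < e"
        using npos by (simp add: field_simps)
    qed
  qed
  have eq: "(\<Sum>m<n. T m) / real n = (\<Sum>m<n. D m) / real n + L" if "n > 0" for n
    using that unfolding D_def by (simp add: sum_subtractf field_simps)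
  have "(\<lambda>n. (\<Sum>m<n. D m) / real n + L) \<longlonglongrightarrow> 0 + L"
    by (intro tendsto_add key tendsto_const)
  then have "(\<lambda>n. (\<Sum>m<n. D m) / real n + L) \<longlonglongrightarrow> L" by simp
  then show ?thesis
    by (rule Lim_transform_eventually) (use eq in \<open>auto simp: eventually_sequentially intro!: exI[of _ 1]\<close>)
qed

lemma sum_shift1: "(\<Sum>k\<in>{1..m}. c k) = (\<Sum>k<m. (c (Suc k) :: real))"
proof (induction m)
  case 0 then show ?case by simp
next
  case (Suc m)
  have "{1..Suc m} = insert (Suc m) {1..m}" by auto
  then show ?case using Suc by simp
qed

lemma asym_var_formula:
  assumes f: "f \<in> L0 \<pi>" and sm: "summable (\<lambda>k. corr \<pi> K f (Suc k))"
  shows "asym_var \<pi> K f = ereal (corr \<pi> K f 0 + 2 * (\<Sum>k. corr \<pi> K f (Suc k)))"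
proof -
  define c where "c = corr \<pi> K f"
  define T where "T m = c 0 + 2 * (\<Sum>k\<in>{1..m}. c k)" for m
  have z: "(\<Sum>x\<in>UNIV. \<pi> x * f x) = 0" using f unfolding L0_def by (simp add: mult.commute)
  have psv: "partial_sum_variance \<pi> K f n = (\<Sum>m<n. T m)" for n
  proof -
    have "partial_sum_variance \<pi> K f n = (\<Sum>i\<in>{1..n}. \<Sum>j\<in>{1..n}. c (nat \<bar>int i - int j\<bar>))"
      unfolding partial_sum_variance_def z c_def corr_def ip_def by simp
    also have "\<dots> = (\<Sum>m<n. T m)" unfolding T_def by (rule double_sum)
    finally show ?thesis .
  qed
  have T: "T \<longlonglongrightarrow> c 0 + 2 * (\<Sum>k. c (Suc k))"
    unfolding T_def sum_shift1
    by (intro tendsto_add tendsto_const tendsto_mult summable_LIMSEQ) (use sm c_def in simp)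
  have "(\<lambda>n. partial_sum_variance \<pi> K f n / real n) \<longlonglongrightarrow> c 0 + 2 * (\<Sum>k. c (Suc k))"
    unfolding psv by (rule cesaro[OF T])
  then have "(\<lambda>n. ereal (partial_sum_variance \<pi> K f n / real n)) \<longlonglongrightarrow> ereal (c 0 + 2 * (\<Sum>k. c (Suc k)))"
    by (simp add: lim_ereal)
  then show ?thesis unfolding asym_var_def c_def by (rule limI)
qed


lemma geom_suc:
  fixes lam :: real assumes "0 \<le> lam" "lam < 1"
  shows "summable (\<lambda>k. lam^Suc k)" "(\<Sum>k. lam^Suc k) = lam / (1 - lam)"
proof -
  have g: "summable (\<lambda>k. lam^k)" using assms by (intro summable_geometric) simp
  show "summable (\<lambda>k. lam^Suc k)" using summable_mult[OF g, of lam] by simp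
  have "(\<Sum>k. lam^Suc k) = lam * (\<Sum>k. lam^k)" using suminf_mult[OF g, of lam] by simp
  also have "\<dots> = lam / (1 - lam)" using assms by (simp add: suminf_geometric)
  finally show "(\<Sum>k. lam^Suc k) = lam / (1 - lam)" .
qed

lemma SS_iff: "f \<in> SS \<pi> \<longleftrightarrow> f \<in> L0 \<pi> \<and> ip \<pi> f f = 1"
  unfolding SS_def L0_def by (simp add: ip_sq)

lemma corr0: "corr \<pi> K f 0 = ip \<pi> f f"
  unfolding corr_def by (simp add: kapply_kid)

lemma upper_bound:
  assumes pos: "\<And>x. \<pi> x > 0" and sa: "selfadj \<pi> K" and pr: "preserves \<pi> K"
    and psd: "\<forall>g\<in>L0 \<pi>. 0 \<le> ip \<pi> g (kapply K g)"
    and ray: "\<forall>g\<in>L0 \<pi>. ip \<pi> g (kapply K g) \<le> lam * ip \<pi> g g"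
    and lam: "lam \<ge> 0" "lam < 1"
  shows "worst_asym_var \<pi> K \<le> ereal ((1 + lam) / (1 - lam))"
  unfolding worst_asym_var_def SS_def[symmetric]
proof (rule SUP_least)
  fix f assume "f \<in> SS \<pi>"
  then have f: "f \<in> L0 \<pi>" and n1: "ip \<pi> f f = 1" by (auto simp: SS_iff)
  have b: "0 \<le> corr \<pi> K f k \<and> corr \<pi> K f k \<le> lam^k" for k
    using corr_geom[OF pos sa pr psd ray lam(1) f, of k] by (simp add: corr0 n1)
  have gs: "summable (\<lambda>k. lam^Suc k)" "(\<Sum>k. lam^Suc k) = lam / (1 - lam)"
    using geom_suc[OF lam] by auto
  have sm: "summable (\<lambda>k. corr \<pi> K f (Suc k))"
  proof (rule summable_comparison_test[OF _ gs(1)])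
    have "\<forall>n. norm (corr \<pi> K f (Suc n)) \<le> lam^Suc n" using b by (metis abs_of_nonneg real_norm_def)
    then show "\<exists>N. \<forall>n\<ge>N. norm (corr \<pi> K f (Suc n)) \<le> lam^Suc n" by blast
  qed
  have "(\<Sum>k. corr \<pi> K f (Suc k)) \<le> (\<Sum>k. lam^Suc k)"
    by (rule suminf_le[OF _ sm gs(1)]) (metis b)
  then have "corr \<pi> K f 0 + 2 * (\<Sum>k. corr \<pi> K f (Suc k)) \<le> 1 + 2 * (lam / (1 - lam))"
    using gs by (simp add: corr0 n1)
  also have "\<dots> = (1 + lam) / (1 - lam)" using lam by (simp add: field_simps)
  finally show "asym_var \<pi> K f \<le> ereal ((1 + lam) / (1 - lam))"
    using asym_var_formula[OF f sm] by simp
qed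

lemma lower_bound:
  assumes f: "f \<in> SS \<pi>" and eig: "kapply K f = (\<lambda>x. lam * f x)"
    and lam: "lam \<ge> 0" "lam < 1"
  shows "ereal ((1 + lam) / (1 - lam)) \<le> worst_asym_var \<pi> K"
proof -
  have fL: "f \<in> L0 \<pi>" and n1: "ip \<pi> f f = 1" using f by (auto simp: SS_iff)
  have pw: "kapply (kpow K k) f = (\<lambda>x. lam^k * f x)" for k
  proof (induction k)
    case 0 then show ?case by (simp add: kapply_kid)
  next
    case (Suc k)
    have "kapply (kpow K (Suc k)) f = (\<lambda>x. lam^k * (lam * f x))"
      by (simp only: kpow.simps kapply_kmult Suc.IH kapply_scale eig)
    then show ?case by (simp add: mult_ac)
  qed
  have c: "corr \<pi> K f k = lam^k" for k
    unfolding corr_def pw by (simp add: ip_scale_right n1)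
  have gs: "summable (\<lambda>k. lam^Suc k)" "(\<Sum>k. lam^Suc k) = lam / (1 - lam)"
    using geom_suc[OF lam] by auto
  have "asym_var \<pi> K f = ereal (1 + 2 * (lam / (1 - lam)))"
    using asym_var_formula[OF fL] gs by (simp add: c)
  also have "1 + 2 * (lam / (1 - lam)) = (1 + lam) / (1 - lam)" using lam by (simp add: field_simps)
  finally have "asym_var \<pi> K f = ereal ((1 + lam) / (1 - lam))" .
  moreover have "asym_var \<pi> K f \<le> worst_asym_var \<pi> K"
    unfolding worst_asym_var_def SS_def[symmetric] using f by (rule SUP_upper)
  ultimately show ?thesis by simp
qed


section \<open>Existence of a Rayleigh maximiser\<close>

lemma abs_le_1_sq: "\<bar>t::real\<bar> \<le> 1 + t^2"
proof (cases "\<bar>t\<bar> \<le> 1")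
  case True then show ?thesis by (smt (verit) zero_le_power2)
next
  case False
  then have "\<bar>t\<bar> * 1 \<le> \<bar>t\<bar> * \<bar>t\<bar>" by (intro mult_left_mono) auto
  then show ?thesis by (simp add: power2_eq_square abs_mult_self_eq)
qed

lemma exists_max:
  fixes K :: "'a::finite \<Rightarrow> 'a \<Rightarrow> real"
  assumes pos: "\<And>x. \<pi> x > 0" and ne: "SS \<pi> \<noteq> {}"
  shows "\<exists>f\<in>SS \<pi>. \<forall>g\<in>SS \<pi>. ip \<pi> g (kapply K g) \<le> ip \<pi> f (kapply K f)"
proof -
  define V where "V = {v::real^'a. (\<Sum>x\<in>UNIV. v$x * \<pi> x) = 0 \<and> (\<Sum>x\<in>UNIV. (v$x)^2 * \<pi> x) = 1}"
  have memV: "v \<in> V \<longleftrightarrow> (\<lambda>x. v$x) \<in> SS \<pi>" for v unfolding V_def SS_def by simp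
  have "V = {v::real^'a. (\<Sum>x\<in>UNIV. v$x * \<pi> x) = 0} \<inter> {v. (\<Sum>x\<in>UNIV. (v$x)^2 * \<pi> x) = 1}"
    unfolding V_def by auto
  moreover have "closed {v::real^'a. (\<Sum>x\<in>UNIV. v$x * \<pi> x) = 0}"
    by (intro closed_Collect_eq continuous_intros)
  moreover have "closed {v::real^'a. (\<Sum>x\<in>UNIV. (v$x)^2 * \<pi> x) = 1}"
    by (intro closed_Collect_eq continuous_intros)
  ultimately have cl: "closed V" by (simp add: closed_Int)
  have bd: "bounded V"
    unfolding bounded_iff
  proof (intro exI ballI)
    fix v assume "v \<in> V"
    then have s1: "(\<Sum>x\<in>UNIV. (v$x)^2 * \<pi> x) = 1" unfolding V_def by simp
    have comp: "\<bar>v$x\<bar> \<le> 1 + 1 / \<pi> x" for x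
    proof -
      have "(v$x)^2 * \<pi> x \<le> (\<Sum>x\<in>UNIV. (v$x)^2 * \<pi> x)"
        by (rule member_le_sum) (auto, metis less_imp_le mult_nonneg_nonneg pos zero_le_power2)
      then have "(v$x)^2 * \<pi> x \<le> 1" using s1 by simp
      then have "(v$x)^2 \<le> 1 / \<pi> x" using pos[of x] by (simp add: field_simps)
      then show ?thesis using abs_le_1_sq[of "v$x"] by linarith
    qed
    have "norm v \<le> (\<Sum>x\<in>UNIV. \<bar>v$x\<bar>)" by (rule norm_le_l1_cart)
    also have "\<dots> \<le> (\<Sum>x\<in>UNIV. 1 + 1 / \<pi> x)" by (intro sum_mono comp)
    finally show "norm v \<le> (\<Sum>x\<in>UNIV. 1 + 1 / \<pi> x)" .
  qed
  have cp: "compact V" using cl bd by (simp add: compact_eq_bounded_closed)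
  obtain f0 where f0: "f0 \<in> SS \<pi>" using ne by auto
  have "(\<chi> x. f0 x) \<in> V" using f0 memV by simp
  then have Vne: "V \<noteq> {}" by auto
  define R where "R v = ip \<pi> (\<lambda>x. v$x) (kapply K (\<lambda>x. v$x))" for v :: "real^'a"
  have "continuous_on UNIV R"
    unfolding R_def ip_def kapply_def by (intro continuous_intros)
  then have "continuous_on V R" by (rule continuous_on_subset) simp
  then obtain v0 where v0: "v0 \<in> V" "\<forall>w\<in>V. R w \<le> R v0"
    using continuous_attains_sup[OF cp Vne] by blast
  show ?thesis
  proof (intro bexI ballI)
    show "(\<lambda>x. v0$x) \<in> SS \<pi>" using v0(1) memV by simp
    fix g assume g: "g \<in> SS \<pi>"
    then have "(\<chi> x. g x) \<in> V" using memV by simp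
    then have "R (\<chi> x. g x) \<le> R v0" using v0(2) by blast
    moreover have "($) (vec_lambda g) = g" by (rule ext) simp
    ultimately show "ip \<pi> g (kapply K g) \<le> ip \<pi> (\<lambda>x. v0$x) (kapply K (\<lambda>x. v0$x))"
      unfolding R_def by simp
  qed
qed

lemma kapply_zero: "kapply K (\<lambda>_. 0) = (\<lambda>_. 0)"
  unfolding kapply_def by simp

lemma ip_zero_left: "ip \<pi> (\<lambda>_. 0) g = 0"
  unfolding ip_def by simp

lemma ray_from_SS:
  assumes pos: "\<And>x. \<pi> x > 0"
    and b: "\<forall>g\<in>SS \<pi>. ip \<pi> g (kapply K g) \<le> lam"
  shows "\<forall>g\<in>L0 \<pi>. ip \<pi> g (kapply K g) \<le> lam * ip \<pi> g g"
proof
  fix g assume g: "g \<in> L0 \<pi>"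
  show "ip \<pi> g (kapply K g) \<le> lam * ip \<pi> g g"
  proof (cases "ip \<pi> g g = 0")
    case True
    then have "g = (\<lambda>_. 0)" using ip_self_eq0[of \<pi>, OF pos] by blast
    then show ?thesis by (simp add: kapply_zero ip_zero_left)
  next
    case False
    define s where "s = ip \<pi> g g"
    have sp: "s > 0" using False ip_self_ge0[of \<pi> g, OF pos] unfolding s_def by simp
    define h where "h = (\<lambda>x. (1 / sqrt s) * g x)"
    have hL: "h \<in> L0 \<pi>" unfolding h_def using L0_scale[OF g] .
    moreover have sq: "sqrt s * sqrt s = s" using sp by simp
    have "ip \<pi> h h = (1 / sqrt s) * ((1 / sqrt s) * ip \<pi> g g)"
      unfolding h_def by (simp only: ip_scale_left ip_scale_right)
    then have "ip \<pi> h h = 1" using sp sq unfolding s_def[symmetric] by (simp add: field_simps)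
    with hL have "h \<in> SS \<pi>" by (simp add: SS_iff)
    then have "ip \<pi> h (kapply K h) \<le> lam" using b by blast
    moreover have "ip \<pi> h (kapply K h) = ip \<pi> g (kapply K g) / s"
      unfolding h_def kapply_scale ip_scale_left ip_scale_right using sp sq by (simp add: field_simps)
    ultimately have "ip \<pi> g (kapply K g) / s \<le> lam" by simp
    then show ?thesis using sp unfolding s_def[symmetric] by (simp add: field_simps)
  qed
qed

lemma max_eigen:
  assumes pos: "\<And>x. \<pi> x > 0" and sa: "selfadj \<pi> K" and pr: "preserves \<pi> K"
    and f: "f \<in> SS \<pi>" and mx: "\<forall>g\<in>SS \<pi>. ip \<pi> g (kapply K g) \<le> ip \<pi> f (kapply K f)"
  shows "kapply K f = (\<lambda>x. ip \<pi> f (kapply K f) * f x)"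
proof -
  define lam where "lam = ip \<pi> f (kapply K f)"
  have fL: "f \<in> L0 \<pi>" and n1: "ip \<pi> f f = 1" using f by (auto simp: SS_iff)
  have ray: "\<forall>g\<in>L0 \<pi>. ip \<pi> g (kapply K g) \<le> lam * ip \<pi> g g"
    using ray_from_SS[of \<pi>, OF pos] mx unfolding lam_def by blast
  define r where "r = (\<lambda>x. lam * f x - kapply K f x)"
  have Kf: "kapply K f \<in> L0 \<pi>" using pr fL unfolding preserves_def by blast
  have rL: "r \<in> L0 \<pi>" unfolding r_def by (rule L0_diff[OF L0_scale[OF fL] Kf])
  have s1: "ip \<pi> r f = ip \<pi> f r" by (rule ip_sym)
  have s2: "ip \<pi> f (kapply K r) = ip \<pi> r (kapply K f)"
    using sa unfolding selfadj_def by (metis ip_sym)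
  have rr: "ip \<pi> r r = lam * ip \<pi> f r - ip \<pi> r (kapply K f)"
    by (subst (2) r_def) (simp add: ip_diff_right ip_scale_right s1)
  have q: "\<forall>t. 0 \<le> 2 * ip \<pi> r r * t + (lam * ip \<pi> r r - ip \<pi> r (kapply K r)) * t^2"
  proof
    fix t
    define g where "g = (\<lambda>x. f x + t * r x)"
    have "g \<in> L0 \<pi>" unfolding g_def by (rule L0_lin[OF fL rL])
    then have "0 \<le> lam * ip \<pi> g g - ip \<pi> g (kapply K g)" using ray by simp
    also have "ip \<pi> g g = ip \<pi> f f + t * ip \<pi> f r + t * (ip \<pi> r f + t * ip \<pi> r r)"
      unfolding g_def by (simp add: ip_add_left ip_add_right ip_scale_left ip_scale_right distrib_left)
    also have "ip \<pi> g (kapply K g) = ip \<pi> f (kapply K f) + t * ip \<pi> f (kapply K r)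
        + t * (ip \<pi> r (kapply K f) + t * ip \<pi> r (kapply K r))"
      unfolding g_def by (simp add: kapply_add kapply_scale ip_add_left ip_add_right ip_scale_left ip_scale_right distrib_left)
    finally show "0 \<le> 2 * ip \<pi> r r * t + (lam * ip \<pi> r r - ip \<pi> r (kapply K r)) * t^2"
      unfolding rr s1 s2 n1 lam_def[symmetric] by (simp add: algebra_simps power2_eq_square)
  qed
  have "ip \<pi> r r = 0" using quad_zero[OF q] .
  then have "r = (\<lambda>_. 0)" using ip_self_eq0[of \<pi>, OF pos] by blast
  then have "\<forall>x. lam * f x - kapply K f x = 0" unfolding r_def by meson
  then show ?thesis unfolding lam_def[symmetric] by (auto intro!: ext)
qed


lemma ray_neg_SS:
  assumes pos: "\<And>x. \<pi> x > 0" and sa: "selfadj \<pi> P" and pr: "preserves \<pi> P"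
    and eig: "\<And>mu. kernel_eigenvalue P mu \<Longrightarrow> Im mu = 0 \<and> Re mu \<ge> 0"
  shows "\<forall>g\<in>SS \<pi>. ip \<pi> g (kapply (\<lambda>x y. - P x y) g) \<le> 0"
proof (cases "SS \<pi> = {}")
  case True then show ?thesis by simp
next
  case False
  define K where "K = (\<lambda>x y. - P x y)"
  obtain f where f: "f \<in> SS \<pi>" and mx: "\<forall>g\<in>SS \<pi>. ip \<pi> g (kapply K g) \<le> ip \<pi> f (kapply K f)"
    using exists_max[of \<pi>, OF pos False] by blast
  define mu where "mu = ip \<pi> f (kapply K f)"
  have e: "kapply K f = (\<lambda>x. mu * f x)"
    unfolding mu_def K_def
    by (rule max_eigen[of \<pi>, OF pos selfadj_neg[OF sa] preserves_neg[OF pr] f mx[unfolded K_def]])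
  then have eP: "kapply P f x = - mu * f x" for x
    unfolding K_def kapply_neg by (metis minus_equation_iff mult_minus_left)
  have fnz: "f \<noteq> (\<lambda>_. 0)" using f by (auto simp: SS_iff ip_zero_left)
  have "kernel_eigenvalue P (complex_of_real (- mu))"
    unfolding kernel_eigenvalue_def
  proof (intro exI conjI allI)
    show "(\<lambda>x. complex_of_real (f x)) \<noteq> (\<lambda>_. 0)"
      using fnz by (auto simp: fun_eq_iff)
    fix x
    have "(\<Sum>y\<in>UNIV. complex_of_real (P x y) * complex_of_real (f y))
        = complex_of_real (kapply P f x)" unfolding kapply_def by simp
    also have "\<dots> = complex_of_real (- mu) * complex_of_real (f x)" using eP by simp
    finally show "(\<Sum>y\<in>UNIV. complex_of_real (P x y) * complex_of_real (f y))
        = complex_of_real (- mu) * complex_of_real (f x)" .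
  qed
  then have "mu \<le> 0" using eig by fastforce
  show ?thesis
  proof
    fix g assume "g \<in> SS \<pi>"
    then have "ip \<pi> g (kapply K g) \<le> mu" using mx unfolding mu_def by blast
    then show "ip \<pi> g (kapply (\<lambda>x y. - P x y) g) \<le> 0" using \<open>mu \<le> 0\<close> unfolding K_def by simp
  qed
qed

lemma P_psd:
  assumes pos: "\<And>x. \<pi> x > 0" and sa: "selfadj \<pi> P" and pr: "preserves \<pi> P"
    and eig: "\<And>mu. kernel_eigenvalue P mu \<Longrightarrow> Im mu = 0 \<and> Re mu \<ge> 0"
  shows "\<forall>g\<in>L0 \<pi>. 0 \<le> ip \<pi> g (kapply P g)"
proof
  fix g assume g: "g \<in> L0 \<pi>"
  have "ip \<pi> g (kapply (\<lambda>x y. - P x y) g) \<le> 0 * ip \<pi> g g"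
    using ray_from_SS[of \<pi>, OF pos ray_neg_SS[OF pos sa pr eig]] g by blast
  then show "0 \<le> ip \<pi> g (kapply P g)" by (simp add: kapply_neg ip_neg_right)
qed

lemma harmonic_max:
  assumes st: "stochastic P" and h: "\<And>x. kapply P f x = f x"
    and M: "\<And>y. f y \<le> f z" and p: "P z y > 0"
  shows "f y = f z"
proof -
  have nn: "\<forall>w\<in>UNIV. 0 \<le> P z w * (f z - f w)" using st M unfolding stochastic_def by simp
  have "(\<Sum>w\<in>UNIV. P z w * (f z - f w)) = f z * (\<Sum>w\<in>UNIV. P z w) - kapply P f z"
    unfolding kapply_def by (simp add: algebra_simps sum_subtractf sum_distrib_left)
  also have "\<dots> = 0" using st h unfolding stochastic_def by simp
  finally have "\<forall>w\<in>UNIV. P z w * (f z - f w) = 0"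
    using nn by (subst sum_nonneg_eq_0_iff[symmetric]) auto
  then have "P z y * (f z - f y) = 0" by blast
  then show ?thesis using p by simp
qed

lemma harmonic_const:
  assumes st: "stochastic P" and irr: "irreducible_kernel P" and h: "\<And>x. kapply P f x = f x"
  shows "\<exists>c. \<forall>y. f y = c"
proof -
  obtain z where M: "\<And>y. f y \<le> f z"
  proof -
    have "Max (range f) \<in> range f" by (rule Max_in) auto
    then obtain z where "Max (range f) = f z" by (metis rangeE)
    moreover have "f y \<le> Max (range f)" for y by (rule Max_ge) auto
    ultimately show ?thesis using that by metis
  qed
  have ind: "\<And>w. (\<forall>y. f y \<le> f w) \<Longrightarrow> kpow P n w y > 0 \<Longrightarrow> f y = f w" for n y
  proof (induction n)
    case 0
    then show ?case by (simp add: kid_def split: if_splits)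
  next
    case (Suc n w)
    have "0 < (\<Sum>u\<in>UNIV. P w u * kpow P n u y)" using Suc.prems by (simp add: kmult_def)
    then obtain u where u: "0 < P w u * kpow P n u y"
      by (metis (no_types, lifting) not_le sum_nonpos)
    have "P w u \<ge> 0" using st unfolding stochastic_def by simp
    then have pu: "P w u > 0" and ku: "kpow P n u y > 0" using u by (auto simp: zero_less_mult_iff)
    have fu: "f u = f w" using harmonic_max[OF st h, of w u] Suc.prems pu by blast
    then have "\<forall>y. f y \<le> f u" using Suc.prems by simp
    then have "f y = f u" using Suc.IH ku by blast
    then show ?case using fu by simp
  qed
  have "f y = f z" for y
  proof -
    obtain n where "kpow P n z y > 0" using irr unfolding irreducible_kernel_def by blast
    then show ?thesis using ind M by blast
  qed
  then show ?thesis by blast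
qed

lemma P_lam_lt1:
  assumes pos: "\<And>x. \<pi> x > 0" and sm: "(\<Sum>x\<in>UNIV. \<pi> x) = 1"
    and st: "stochastic P" and irr: "irreducible_kernel P"
    and f: "f \<in> SS \<pi>" and e: "kapply P f = (\<lambda>x. lam * f x)"
  shows "lam < 1"
proof -
  have fL: "f \<in> L0 \<pi>" and n1: "ip \<pi> f f = 1" using f by (auto simp: SS_iff)
  have fnz: "f \<noteq> (\<lambda>_. 0)" using n1 by (auto simp: ip_zero_left)
  obtain z where M: "\<And>y. \<bar>f y\<bar> \<le> \<bar>f z\<bar>"
  proof -
    have "Max (range (\<lambda>y. \<bar>f y\<bar>)) \<in> range (\<lambda>y. \<bar>f y\<bar>)" by (rule Max_in) auto
    then obtain z where "Max (range (\<lambda>y. \<bar>f y\<bar>)) = \<bar>f z\<bar>" by (metis (no_types, lifting) rangeE)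
    moreover have "\<bar>f y\<bar> \<le> Max (range (\<lambda>y. \<bar>f y\<bar>))" for y by (rule Max_ge) auto
    ultimately show ?thesis using that by metis
  qed
  have fz: "\<bar>f z\<bar> > 0"
  proof (rule ccontr)
    assume "\<not> \<bar>f z\<bar> > 0"
    then have "\<forall>y. f y = 0" using M by (metis abs_le_zero_iff abs_not_less_zero linorder_neqE_linordered_idom)
    then show False using fnz by (auto simp: fun_eq_iff)
  qed
  have "\<bar>lam\<bar> * \<bar>f z\<bar> = \<bar>kapply P f z\<bar>" using e by (simp add: abs_mult)
  also have "\<dots> \<le> (\<Sum>y\<in>UNIV. \<bar>P z y * f y\<bar>)" unfolding kapply_def by (rule sum_abs)
  also have "\<dots> \<le> (\<Sum>y\<in>UNIV. P z y * \<bar>f z\<bar>)"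
    using st M unfolding stochastic_def by (intro sum_mono) (simp add: abs_mult mult_left_mono)
  also have "\<dots> = \<bar>f z\<bar>" using st unfolding stochastic_def by (simp add: sum_distrib_right[symmetric])
  finally have "\<bar>lam\<bar> * \<bar>f z\<bar> \<le> 1 * \<bar>f z\<bar>" by simp
  then have l1: "lam \<le> 1" using fz by (simp add: mult_le_cancel_right)
  have "lam \<noteq> 1"
  proof
    assume "lam = 1"
    then have "\<And>x. kapply P f x = f x" using e by simp
    then obtain c where c: "\<forall>y. f y = c" using harmonic_const[OF st irr] by blast
    have "(\<Sum>x\<in>UNIV. f x * \<pi> x) = c * (\<Sum>x\<in>UNIV. \<pi> x)" using c by (simp add: sum_distrib_left)
    then have "c = 0" using fL sm unfolding L0_def by simp
    then show False using c fnz by (auto simp: fun_eq_iff)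
  qed
  then show ?thesis using l1 by simp
qed

lemma contraction:
  assumes pos: "\<And>x. \<pi> x > 0" and st: "stochastic K" and rev: "reversible \<pi> K"
  shows "ip \<pi> (kapply K f) (kapply K f) \<le> ip \<pi> f f"
proof -
  have pt: "(kapply K f x)^2 \<le> (\<Sum>y\<in>UNIV. K x y * (f y)^2)" for x
  proof -
    define m where "m = kapply K f x"
    have "0 \<le> (\<Sum>y\<in>UNIV. K x y * (f y - m)^2)"
      using st unfolding stochastic_def by (intro sum_nonneg) simp
    also have "\<dots> = (\<Sum>y\<in>UNIV. K x y * (f y)^2) - 2 * m * (\<Sum>y\<in>UNIV. K x y * f y) + m^2 * (\<Sum>y\<in>UNIV. K x y)"
      by (simp add: power2_eq_square algebra_simps sum.distrib sum_subtractf sum_distrib_left)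
    also have "\<dots> = (\<Sum>y\<in>UNIV. K x y * (f y)^2) - m^2"
      using st unfolding stochastic_def m_def kapply_def by (simp add: power2_eq_square)
    finally show ?thesis unfolding m_def by simp
  qed
  have "ip \<pi> (kapply K f) (kapply K f) = (\<Sum>x\<in>UNIV. \<pi> x * (kapply K f x)^2)"
    unfolding ip_def by (simp add: power2_eq_square mult.assoc)
  also have "\<dots> \<le> (\<Sum>x\<in>UNIV. \<pi> x * (\<Sum>y\<in>UNIV. K x y * (f y)^2))"
    using pos pt by (intro sum_mono mult_left_mono) (auto intro: less_imp_le)
  also have "\<dots> = (\<Sum>x\<in>UNIV. \<Sum>y\<in>UNIV. (\<pi> x * K x y) * (f y)^2)"
    by (simp add: sum_distrib_left mult.assoc)
  also have "\<dots> = (\<Sum>x\<in>UNIV. \<Sum>y\<in>UNIV. (\<pi> y * K y x) * (f y)^2)"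
    by (intro sum.cong refl) (metis rev reversible_def)
  also have "\<dots> = (\<Sum>y\<in>UNIV. \<Sum>x\<in>UNIV. (\<pi> y * K y x) * (f y)^2)"
    by (rule sum.swap)
  also have "\<dots> = (\<Sum>y\<in>UNIV. \<pi> y * (f y)^2 * (\<Sum>x\<in>UNIV. K y x))"
    by (simp add: sum_distrib_left sum_distrib_right algebra_simps)
  also have "\<dots> = ip \<pi> f f"
    using st unfolding stochastic_def ip_def by (simp add: power2_eq_square mult.assoc)
  finally show ?thesis .
qed


section \<open>The comparison chain\<close>

lemma stoch_rows: "stochastic K \<Longrightarrow> \<forall>x. (\<Sum>y\<in>UNIV. K x y) = 1"
  unfolding stochastic_def by blast

lemma sandwich_form:
  assumes "selfadj \<pi> Q"
  shows "ip \<pi> g (kapply (kmult (kmult Q P) Q) g) = ip \<pi> (kapply Q g) (kapply P (kapply Q g))"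
  using assms unfolding selfadj_def by (simp add: kapply_kmult)

lemma wav_empty: "SS \<pi> = {} \<Longrightarrow> worst_asym_var \<pi> K = bot"
  unfolding worst_asym_var_def SS_def[symmetric] by simp

lemma chain:
  fixes Gk Q P :: "'a::finite \<Rightarrow> 'a \<Rightarrow> real"
  assumes pos: "\<And>x. \<pi> x > 0" and sm: "(\<Sum>x\<in>UNIV. \<pi> x) = 1"
    and stP: "stochastic P" and irr: "irreducible_kernel P" and revP: "reversible \<pi> P"
    and eig: "\<And>mu. kernel_eigenvalue P mu \<Longrightarrow> Im mu = 0 \<and> Re mu \<ge> 0"
    and stG: "stochastic Gk" and revG: "reversible \<pi> Gk"
    and stQ: "stochastic Q" and revQ: "reversible \<pi> Q"
    and fx: "\<And>f. kapply Q (kapply Gk f) = kapply Gk f"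
  shows "worst_asym_var \<pi> (kmult (kmult Gk P) Gk) \<le> worst_asym_var \<pi> (kmult (kmult Q P) Q)
       \<and> worst_asym_var \<pi> (kmult (kmult Q P) Q) \<le> worst_asym_var \<pi> P"
proof (cases "SS \<pi> = {}")
  case True
  then show ?thesis by (simp add: wav_empty)
next
  case ne: False
  have sP: "selfadj \<pi> P" using revP by (rule reversible_selfadj)
  have sG: "selfadj \<pi> Gk" using revG by (rule reversible_selfadj)
  have sQ: "selfadj \<pi> Q" using revQ by (rule reversible_selfadj)
  have prP: "preserves \<pi> P" using sP stoch_rows[OF stP] by (rule preserves_rowsum)
  have prG: "preserves \<pi> Gk" using sG stoch_rows[OF stG] by (rule preserves_rowsum)
  have prQ: "preserves \<pi> Q" using sQ stoch_rows[OF stQ] by (rule preserves_rowsum)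
  define Q' where "Q' = kmult (kmult Q P) Q"
  define G' where "G' = kmult (kmult Gk P) Gk"
  have sQ': "selfadj \<pi> Q'" unfolding Q'_def by (rule selfadj_sandwich[OF sQ sP])
  have sG': "selfadj \<pi> G'" unfolding G'_def by (rule selfadj_sandwich[OF sG sP])
  have prQ': "preserves \<pi> Q'" unfolding Q'_def by (rule preserves_sandwich[OF prQ prP])
  have prG': "preserves \<pi> G'" unfolding G'_def by (rule preserves_sandwich[OF prG prP])
  have psdP: "\<forall>g\<in>L0 \<pi>. 0 \<le> ip \<pi> g (kapply P g)" by (rule P_psd[OF pos sP prP eig])
  obtain fP where fP: "fP \<in> SS \<pi>" and mxP: "\<forall>g\<in>SS \<pi>. ip \<pi> g (kapply P g) \<le> ip \<pi> fP (kapply P fP)"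
    using exists_max[of \<pi>, OF pos ne] by blast
  define lamP where "lamP = ip \<pi> fP (kapply P fP)"
  have eP: "kapply P fP = (\<lambda>x. lamP * fP x)" unfolding lamP_def by (rule max_eigen[OF pos sP prP fP mxP])
  have lamP0: "lamP \<ge> 0" using psdP fP unfolding lamP_def by (auto simp: SS_iff)
  have lamP1: "lamP < 1" by (rule P_lam_lt1[OF pos sm stP irr fP eP])
  have rayP: "\<forall>g\<in>L0 \<pi>. ip \<pi> g (kapply P g) \<le> lamP * ip \<pi> g g"
    using ray_from_SS[of \<pi>, OF pos] mxP unfolding lamP_def by blast
  have QL: "kapply Q g \<in> L0 \<pi>" if "g \<in> L0 \<pi>" for g using prQ that unfolding preserves_def by blast
  have GL: "kapply Gk g \<in> L0 \<pi>" if "g \<in> L0 \<pi>" for g using prG that unfolding preserves_def by blast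
  have psdQ': "\<forall>g\<in>L0 \<pi>. 0 \<le> ip \<pi> g (kapply Q' g)"
    unfolding Q'_def sandwich_form[OF sQ] using psdP QL by blast
  have rayQ': "\<forall>g\<in>L0 \<pi>. ip \<pi> g (kapply Q' g) \<le> lamP * ip \<pi> g g"
  proof
    fix g assume g: "g \<in> L0 \<pi>"
    have "ip \<pi> g (kapply Q' g) \<le> lamP * ip \<pi> (kapply Q g) (kapply Q g)"
      unfolding Q'_def sandwich_form[OF sQ] using rayP QL[OF g] by blast
    also have "\<dots> \<le> lamP * ip \<pi> g g"
      using contraction[OF pos stQ revQ] lamP0 by (intro mult_left_mono) auto
    finally show "ip \<pi> g (kapply Q' g) \<le> lamP * ip \<pi> g g" .
  qed
  have VQ: "worst_asym_var \<pi> Q' \<le> ereal ((1 + lamP) / (1 - lamP))"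
    by (rule upper_bound[OF pos sQ' prQ' psdQ' rayQ' lamP0 lamP1])
  have VP: "ereal ((1 + lamP) / (1 - lamP)) \<le> worst_asym_var \<pi> P"
    by (rule lower_bound[OF fP eP lamP0 lamP1])
  obtain fQ where fQ: "fQ \<in> SS \<pi>" and mxQ: "\<forall>g\<in>SS \<pi>. ip \<pi> g (kapply Q' g) \<le> ip \<pi> fQ (kapply Q' fQ)"
    using exists_max[of \<pi>, OF pos ne] by blast
  define lamQ where "lamQ = ip \<pi> fQ (kapply Q' fQ)"
  have eQ: "kapply Q' fQ = (\<lambda>x. lamQ * fQ x)" unfolding lamQ_def by (rule max_eigen[OF pos sQ' prQ' fQ mxQ])
  have lamQ0: "lamQ \<ge> 0" using psdQ' fQ unfolding lamQ_def by (auto simp: SS_iff)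
  have "lamQ \<le> lamP * ip \<pi> fQ fQ" using rayQ' fQ unfolding lamQ_def by (auto simp: SS_iff)
  then have lamQ1: "lamQ < 1" using fQ lamP1 by (auto simp: SS_iff)
  have rayQ: "\<forall>g\<in>L0 \<pi>. ip \<pi> g (kapply Q' g) \<le> lamQ * ip \<pi> g g"
    using ray_from_SS[of \<pi>, OF pos] mxQ unfolding lamQ_def by blast
  have psdG': "\<forall>g\<in>L0 \<pi>. 0 \<le> ip \<pi> g (kapply G' g)"
    unfolding G'_def sandwich_form[OF sG] using psdP GL by blast
  have rayG': "\<forall>g\<in>L0 \<pi>. ip \<pi> g (kapply G' g) \<le> lamQ * ip \<pi> g g"
  proof
    fix g assume g: "g \<in> L0 \<pi>"
    define h where "h = kapply Gk g"
    have hL: "h \<in> L0 \<pi>" unfolding h_def using GL[OF g] .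
    have "ip \<pi> g (kapply G' g) = ip \<pi> h (kapply P h)"
      unfolding G'_def sandwich_form[OF sG] h_def ..
    also have "\<dots> = ip \<pi> (kapply Q h) (kapply P (kapply Q h))"
      unfolding h_def fx ..
    also have "\<dots> = ip \<pi> h (kapply Q' h)"
      unfolding Q'_def sandwich_form[OF sQ] ..
    also have "\<dots> \<le> lamQ * ip \<pi> h h" using rayQ hL by blast
    also have "\<dots> \<le> lamQ * ip \<pi> g g"
      unfolding h_def using contraction[OF pos stG revG] lamQ0 by (intro mult_left_mono) auto
    finally show "ip \<pi> g (kapply G' g) \<le> lamQ * ip \<pi> g g" .
  qed
  have VG: "worst_asym_var \<pi> G' \<le> ereal ((1 + lamQ) / (1 - lamQ))"
    by (rule upper_bound[OF pos sG' prG' psdG' rayG' lamQ0 lamQ1])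
  have VQ2: "ereal ((1 + lamQ) / (1 - lamQ)) \<le> worst_asym_var \<pi> Q'"
    by (rule lower_bound[OF fQ eQ lamQ0 lamQ1])
  show ?thesis
    using order_trans[OF VG VQ2] order_trans[OF VQ VP] unfolding Q'_def G'_def by simp
qed


section \<open>Orbit kernels\<close>

lemma orbit_facts:
  assumes "group_action G UNIV \<phi>"
  shows "x \<in> orbit G \<phi> x" and "y \<in> orbit G \<phi> x \<Longrightarrow> orbit G \<phi> y = orbit G \<phi> x"
proof -
  show "x \<in> orbit G \<phi> x" using group_action.orbit_refl[OF assms] by simp
  assume y: "y \<in> orbit G \<phi> x"
  have xy: "x \<in> orbit G \<phi> y" using group_action.orbit_sym[OF assms] y by simp
  show "orbit G \<phi> y = orbit G \<phi> x"
  proof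
    show "orbit G \<phi> y \<subseteq> orbit G \<phi> x"
      using group_action.orbit_trans[OF assms] y by blast
    show "orbit G \<phi> x \<subseteq> orbit G \<phi> y"
      using group_action.orbit_trans[OF assms] xy by blast
  qed
qed

lemma sum_if_in: "(\<Sum>y\<in>(UNIV::'a::finite set). if y \<in> A then h y else 0) = sum h A"
proof -
  have "sum h (UNIV \<inter> A) = (\<Sum>y\<in>UNIV. if y \<in> A then h y else 0)"
    by (rule sum.inter_restrict) simp
  then show ?thesis by simp
qed

lemma gibbs_props:
  fixes \<pi> :: "'a::finite \<Rightarrow> real"
  assumes pos: "\<And>x. \<pi> x > 0" and ga: "group_action G UNIV \<phi>"
  shows "stochastic (gibbs_kernel G \<phi> \<pi>)" "reversible \<pi> (gibbs_kernel G \<phi> \<pi>)"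
    "\<And>f y x. y \<in> orbit G \<phi> x \<Longrightarrow> kapply (gibbs_kernel G \<phi> \<pi>) f y = kapply (gibbs_kernel G \<phi> \<pi>) f x"
proof -
  define Orb where "Orb = orbit G \<phi>"
  have refl: "x \<in> Orb x" for x unfolding Orb_def using orbit_facts[OF ga] by blast
  have cls: "y \<in> Orb x \<Longrightarrow> Orb y = Orb x" for x y unfolding Orb_def using orbit_facts[OF ga] by blast
  define S where "S x = (\<Sum>z\<in>Orb x. \<pi> z)" for x
  have Sp: "S x > 0" for x unfolding S_def using refl[of x] pos by (intro sum_pos) auto
  have Gk: "gibbs_kernel G \<phi> \<pi> = (\<lambda>x y. if y \<in> Orb x then \<pi> y / S x else 0)"
    unfolding gibbs_kernel_def Orb_def S_def ..
  show "stochastic (gibbs_kernel G \<phi> \<pi>)"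
    unfolding stochastic_def Gk
  proof (intro conjI allI)
    fix x y show "0 \<le> (if y \<in> Orb x then \<pi> y / S x else 0)" using pos[of y] Sp[of x] by simp
  next
    fix x
    have "(\<Sum>y\<in>UNIV. if y \<in> Orb x then \<pi> y / S x else 0) = (\<Sum>y\<in>Orb x. \<pi> y / S x)" by (rule sum_if_in)
    also have "\<dots> = S x / S x" unfolding S_def by (simp add: sum_divide_distrib[symmetric])
    also have "\<dots> = 1" using Sp[of x] by simp
    finally show "(\<Sum>y\<in>UNIV. if y \<in> Orb x then \<pi> y / S x else 0) = 1" .
  qed
  show "reversible \<pi> (gibbs_kernel G \<phi> \<pi>)"
    unfolding reversible_def Gk
  proof (intro allI)
    fix x y
    show "\<pi> x * (if y \<in> Orb x then \<pi> y / S x else 0) = \<pi> y * (if x \<in> Orb y then \<pi> x / S y else 0)"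
    proof (cases "y \<in> Orb x")
      case True
      then have "x \<in> Orb y" "S y = S x" using cls refl unfolding S_def by auto
      then show ?thesis using True by simp
    next
      case False
      then have "x \<notin> Orb y" using cls refl by metis
      then show ?thesis using False by simp
    qed
  qed
  fix f y x assume "y \<in> orbit G \<phi> x"
  then have e: "Orb y = Orb x" "S y = S x" using cls unfolding Orb_def S_def by auto
  have "gibbs_kernel G \<phi> \<pi> y = gibbs_kernel G \<phi> \<pi> x" unfolding Gk using e by (simp only:)
  then show "kapply (gibbs_kernel G \<phi> \<pi>) f y = kapply (gibbs_kernel G \<phi> \<pi>) f x"
    unfolding kapply_def by simp
qed

lemma mh_props:
  fixes \<pi> :: "'a::finite \<Rightarrow> real" and acc :: "real \<Rightarrow> real \<Rightarrow> real"
  assumes pos: "\<And>x. \<pi> x > 0" and ga: "group_action G UNIV \<phi>"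
    and acc0: "\<And>a b. a > 0 \<Longrightarrow> b > 0 \<Longrightarrow> 0 \<le> acc a b"
    and acc1: "\<And>a b. a > 0 \<Longrightarrow> b > 0 \<Longrightarrow> acc a b \<le> 1"
    and accs: "\<And>a b. a > 0 \<Longrightarrow> b > 0 \<Longrightarrow> a * acc a b = b * acc b a"
  shows "stochastic (orbit_mh_kernel acc G \<phi> \<pi>)" "reversible \<pi> (orbit_mh_kernel acc G \<phi> \<pi>)"
    "\<And>h. (\<And>x y. y \<in> orbit G \<phi> x \<Longrightarrow> h y = h x) \<Longrightarrow> kapply (orbit_mh_kernel acc G \<phi> \<pi>) h = h"
proof -
  define Orb where "Orb = orbit G \<phi>"
  have refl: "x \<in> Orb x" for x unfolding Orb_def using orbit_facts[OF ga] by blast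
  have cls: "y \<in> Orb x \<Longrightarrow> Orb y = Orb x" for x y unfolding Orb_def using orbit_facts[OF ga] by blast
  define c where "c x = 1 / (real (card (Orb x)) - 1)" for x
  define off where "off x y = (if y \<in> Orb x - {x} then c x * acc (\<pi> x) (\<pi> y) else 0)" for x y
  define Mk where "Mk = (\<lambda>x y. if x = y then 1 - (\<Sum>z\<in>UNIV - {x}. off x z) else off x y)"
  have Mk_eq: "orbit_mh_kernel acc G \<phi> \<pi> = Mk"
    unfolding orbit_mh_kernel_def Let_def Mk_def off_def c_def Orb_def ..
  have card1: "card (Orb x) \<ge> 1" for x using refl[of x] by (metis card_0_eq finite less_one not_le empty_iff)
  have c0: "c x \<ge> 0" for x unfolding c_def using card1[of x] by simp
  have off0: "off x y \<ge> 0" for x y unfolding off_def using c0 acc0 pos by simp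
  have offle: "(\<Sum>z\<in>UNIV - {x}. off x z) \<le> 1" for x
  proof -
    have "(\<Sum>z\<in>UNIV - {x}. off x z) \<le> (\<Sum>z\<in>UNIV. off x z)"
      by (rule sum_mono2) (auto simp: off0)
    also have "\<dots> \<le> (\<Sum>z\<in>UNIV. if z \<in> Orb x - {x} then c x else 0)"
      unfolding off_def using c0 acc1 pos by (intro sum_mono) (auto simp: mult_left_le)
    also have "\<dots> = (\<Sum>z\<in>Orb x - {x}. c x)" by (rule sum_if_in)
    also have "\<dots> = real (card (Orb x) - 1) * c x" using refl[of x] by simp
    also have "\<dots> = (real (card (Orb x)) - 1) * c x" using card1[of x] by (simp add: of_nat_diff)
    also have "\<dots> \<le> 1" unfolding c_def by (cases "real (card (Orb x)) - 1 = 0") auto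
    finally show ?thesis .
  qed
  have Mk_off: "x \<noteq> y \<Longrightarrow> Mk x y = off x y" for x y unfolding Mk_def by simp
  have rows: "(\<Sum>y\<in>UNIV. Mk x y) = 1" for x
  proof -
    have "(\<Sum>y\<in>UNIV. Mk x y) = Mk x x + (\<Sum>y\<in>UNIV - {x}. Mk x y)"
      by (rule sum.remove) auto
    also have "(\<Sum>y\<in>UNIV - {x}. Mk x y) = (\<Sum>y\<in>UNIV - {x}. off x y)"
      by (intro sum.cong refl) (auto simp: Mk_off)
    finally show ?thesis unfolding Mk_def by simp
  qed
  show "stochastic (orbit_mh_kernel acc G \<phi> \<pi>)"
    unfolding stochastic_def Mk_eq
  proof (intro conjI allI)
    fix x y show "0 \<le> Mk x y" unfolding Mk_def using offle[of x] off0[of x y] by (cases "x = y") auto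
  next
    fix x show "(\<Sum>y\<in>UNIV. Mk x y) = 1" by (rule rows)
  qed
  show "reversible \<pi> (orbit_mh_kernel acc G \<phi> \<pi>)"
    unfolding reversible_def Mk_eq
  proof (intro allI)
    fix x y
    show "\<pi> x * Mk x y = \<pi> y * Mk y x"
    proof (cases "x = y")
      case True then show ?thesis by simp
    next
      case xy: False
      show ?thesis
      proof (cases "y \<in> Orb x")
        case True
        then have "x \<in> Orb y" "Orb y = Orb x" using cls refl by auto
        then have "c y = c x" unfolding c_def by simp
        moreover have "\<pi> x * acc (\<pi> x) (\<pi> y) = \<pi> y * acc (\<pi> y) (\<pi> x)" using accs pos by blast
        ultimately show ?thesis using xy True \<open>x \<in> Orb y\<close>
          by (simp add: Mk_off off_def)
      next
        case False
        then have "x \<notin> Orb y" using cls refl by metis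
        then show ?thesis using False xy by (simp add: Mk_off off_def)
      qed
    qed
  qed
  fix h :: "'a \<Rightarrow> real" assume inv: "\<And>x y. y \<in> orbit G \<phi> x \<Longrightarrow> h y = h x"
  show "kapply (orbit_mh_kernel acc G \<phi> \<pi>) h = h"
    unfolding Mk_eq
  proof (rule ext)
    fix x
    have "kapply Mk h x = (\<Sum>y\<in>UNIV. Mk x y * h x)"
      unfolding kapply_def
    proof (rule sum.cong[OF HOL.refl])
      fix y
      show "Mk x y * h y = Mk x y * h x"
      proof (cases "y \<in> Orb x")
        case True then show ?thesis using inv unfolding Orb_def by simp
      next
        case False
        then have "y \<noteq> x" using refl by auto
        then show ?thesis using False by (simp add: Mk_off off_def)
      qed
    qed
    also have "\<dots> = h x" using rows[of x] by (simp add: sum_distrib_right[symmetric])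
    finally show "kapply Mk h x = h x" .
  qed
qed


theorem proposition4p2:
  fixes \<pi> :: "'a::finite \<Rightarrow> real" and P :: "'a \<Rightarrow> 'a \<Rightarrow> real"
    and G :: "('g, 'b) monoid_scheme" and \<phi> :: "'g \<Rightarrow> 'a \<Rightarrow> 'a"
  assumes "pmf_full \<pi>"
    and "ergodic_kernel P"
    and "reversible \<pi> P"
    and "\<And>mu. kernel_eigenvalue P mu \<Longrightarrow> Im mu = 0 \<and> Re mu \<ge> 0"
    and "group G"
    and "group_action G UNIV \<phi>"
  shows "worst_asym_var \<pi> (kmult (kmult (gibbs_kernel G \<phi> \<pi>) P) (gibbs_kernel G \<phi> \<pi>))
           \<le> worst_asym_var \<pi> (kmult (kmult (metropolis_kernel G \<phi> \<pi>) P) (metropolis_kernel G \<phi> \<pi>))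
       \<and> worst_asym_var \<pi> (kmult (kmult (metropolis_kernel G \<phi> \<pi>) P) (metropolis_kernel G \<phi> \<pi>))
           \<le> worst_asym_var \<pi> P
       \<and> worst_asym_var \<pi> (kmult (kmult (gibbs_kernel G \<phi> \<pi>) P) (gibbs_kernel G \<phi> \<pi>))
           \<le> worst_asym_var \<pi> (kmult (kmult (barker_kernel G \<phi> \<pi>) P) (barker_kernel G \<phi> \<pi>))
       \<and> worst_asym_var \<pi> (kmult (kmult (barker_kernel G \<phi> \<pi>) P) (barker_kernel G \<phi> \<pi>))
           \<le> worst_asym_var \<pi> P"
proof -
  have pos: "\<And>x. \<pi> x > 0" and sm: "(\<Sum>x\<in>UNIV. \<pi> x) = 1"
    using assms(1) unfolding pmf_full_def by auto
  have stP: "stochastic P" and irr: "irreducible_kernel P"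
    using assms(2) unfolding ergodic_kernel_def by auto
  have ga: "group_action G UNIV \<phi>" by (rule assms(6))
  note gp = gibbs_props[of \<pi>, OF pos ga]
  define Gk where "Gk = gibbs_kernel G \<phi> \<pi>"
  have stG: "stochastic Gk" and revG: "reversible \<pi> Gk" unfolding Gk_def using gp by auto
  have invG: "\<And>f x y. y \<in> orbit G \<phi> x \<Longrightarrow> kapply Gk f y = kapply Gk f x"
    unfolding Gk_def using gp(3) by blast
  have met: "metropolis_kernel G \<phi> \<pi> = orbit_mh_kernel (\<lambda>px py. min 1 (py / px)) G \<phi> \<pi>"
    unfolding metropolis_kernel_def ..
  have bar: "barker_kernel G \<phi> \<pi> = orbit_mh_kernel (\<lambda>px py. py / (px + py)) G \<phi> \<pi>"
    unfolding barker_kernel_def ..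
  have m0: "\<And>a b::real. a > 0 \<Longrightarrow> b > 0 \<Longrightarrow> 0 \<le> min 1 (b / a)" by simp
  have m1: "\<And>a b. a > 0 \<Longrightarrow> b > 0 \<Longrightarrow> min 1 (b / a) \<le> (1::real)" by simp
  have ms: "\<And>a b. a > 0 \<Longrightarrow> b > 0 \<Longrightarrow> a * min 1 (b / a) = b * min 1 (a / (b::real))"
  proof -
    fix a b :: real assume ab: "a > 0" "b > 0"
    show "a * min 1 (b / a) = b * min 1 (a / b)"
      using ab by (cases "b \<le> a") (auto simp: min_def field_simps)
  qed
  note mp = mh_props[of \<pi> G \<phi> "\<lambda>px py. min 1 (py / px)", OF pos ga m0 m1 ms]
  have b0: "\<And>a b::real. a > 0 \<Longrightarrow> b > 0 \<Longrightarrow> 0 \<le> b / (a + b)" by simp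
  have b1: "\<And>a b. a > 0 \<Longrightarrow> b > 0 \<Longrightarrow> b / (a + b) \<le> (1::real)" by simp
  have bs: "\<And>a b. a > 0 \<Longrightarrow> b > 0 \<Longrightarrow> a * (b / (a + b)) = b * (a / (b + (a::real)))"
    by (simp add: add.commute mult.commute)
  note bp = mh_props[of \<pi> G \<phi> "\<lambda>px py. py / (px + py)", OF pos ga b0 b1 bs]
  have c1: "worst_asym_var \<pi> (kmult (kmult Gk P) Gk) \<le> worst_asym_var \<pi> (kmult (kmult (metropolis_kernel G \<phi> \<pi>) P) (metropolis_kernel G \<phi> \<pi>))
       \<and> worst_asym_var \<pi> (kmult (kmult (metropolis_kernel G \<phi> \<pi>) P) (metropolis_kernel G \<phi> \<pi>)) \<le> worst_asym_var \<pi> P"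
    unfolding met
    by (rule chain[OF pos sm stP irr assms(3) assms(4) stG revG mp(1) mp(2)])
       (auto intro!: mp(3) invG)
  have c2: "worst_asym_var \<pi> (kmult (kmult Gk P) Gk) \<le> worst_asym_var \<pi> (kmult (kmult (barker_kernel G \<phi> \<pi>) P) (barker_kernel G \<phi> \<pi>))
       \<and> worst_asym_var \<pi> (kmult (kmult (barker_kernel G \<phi> \<pi>) P) (barker_kernel G \<phi> \<pi>)) \<le> worst_asym_var \<pi> P"
    unfolding bar
    by (rule chain[OF pos sm stP irr assms(3) assms(4) stG revG bp(1) bp(2)])
       (auto intro!: bp(3) invG)
  show ?thesis using c1 c2 unfolding Gk_def by blast
qed

end
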